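(* Let $m\ge5$ with $m\equiv1\pmod4$, let $N=3^m-1$ and $v=\frac{3^m-1}{2}+3^{(m-1)/2}-1$. Then $\gcd(v,N)=1$, and for every integer $i$ with $0\le i\le\frac{3^{(m-1)/2}-1}{4}+2$, the $3$-weight of $v(1+2i)\bmod N$ is congruent to $1$ modulo $4$ (i.e. the $3$-adic digit vector of $v(1+2i)\bmod N$ lies in $S_1(m)$).
   Context: For an integer $i$, $i\bmod N$ is the unique $s\in\{0,\dots,N-1\}$ with $N\mid i-s$. For $0\le s\le 3^m-1$ with $3$-adic expansion $s=\sum_{j=0}^{m-1}s_j3^j$, $s_j\in\{0,1,2\}$, the $3$-weight is $\mathrm{wt}_3(s)=\sum_j s_j$. $S_j(m)=\{(i_0,\dots,i_{m-1})\in\{0,1,2\}^m:\sum i_k\equiv j\pmod 4\}$. *)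

theory Defs
  imports Main
begin

definition digit3 :: "nat \<Rightarrow> nat \<Rightarrow> nat" where
  "digit3 s j = (s div 3 ^ j) mod 3"

definition digits3 :: "nat \<Rightarrow> nat \<Rightarrow> nat list" where
  "digits3 m s = map (digit3 s) [0..<m]"

definition wt3 :: "nat \<Rightarrow> nat \<Rightarrow> nat" where
  "wt3 m s = (\<Sum>j<m. digit3 s j)"

definition S_set :: "nat \<Rightarrow> nat \<Rightarrow> nat list set" where
  "S_set j m = {xs. length xs = m \<and> set xs \<subseteq> {0,1,2} \<and> sum_list xs mod 4 = j mod 4}"

end

theory Submission
  imports Defs
begin

lemma digit3_Suc: "digit3 x (Suc j) = digit3 (x div 3) j"
  by (simp add: digit3_def div_mult2_eq mult.commute)

lemma wt3_Suc: "wt3 (Suc n) x = x mod 3 + wt3 n (x div 3)"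
  unfolding wt3_def sum.lessThan_Suc_shift digit3_Suc
  by (simp add: digit3_def)

lemma wt3_0 [simp]: "wt3 0 x = 0"
  by (simp add: wt3_def)

lemma wt3_split:
  "x < 3 ^ p \<Longrightarrow> wt3 (p + q) (x + 3 ^ p * y) = wt3 p x + wt3 q y"
proof (induction p arbitrary: x)
  case 0
  then show ?case by simp
next
  case (Suc p)
  have m: "(x + 3 ^ Suc p * y) mod 3 = x mod 3" by (simp add: mult.assoc)
  have d: "(x + 3 ^ Suc p * y) div 3 = x div 3 + 3 ^ p * y" by simp
  have "x div 3 < 3 ^ p" using Suc.prems by simp
  then show ?case
    using Suc.IH[of "x div 3"] by (simp only: add_Suc wt3_Suc m d)
qed

lemma wt3_compl:
  "x < 3 ^ n \<Longrightarrow> wt3 n x + wt3 n (3 ^ n - 1 - x) = 2 * n"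
proof (induction n arbitrary: x)
  case 0
  then show ?case by simp
next
  case (Suc n)
  define q where "q = x div 3"
  define r where "r = x mod 3"
  have qr: "x = 3 * q + r" "r < 3" unfolding q_def r_def by simp_all
  have q: "q < 3 ^ n" using Suc.prems unfolding q_def by simp
  define Q where "Q = 3 ^ n - 1 - q"
  have Q: "3 ^ n = q + 1 + Q" using q unfolding Q_def by linarith
  have e0: "3 ^ Suc n = 3 * (q + 1 + Q)" using Q by simp
  have e1: "3 ^ n - 1 - q = Q" using Q by simp
  have e: "3 ^ Suc n - 1 - x = 3 * Q + (2 - r)"
    unfolding e0 qr(1) using qr(2) by arith
  have r2: "2 - r < 3" by simp
  have m: "(3 ^ Suc n - 1 - x) mod 3 = 2 - r" unfolding e using r2 by simp
  have d: "(3 ^ Suc n - 1 - x) div 3 = 3 ^ n - 1 - q" unfolding e e1 using r2 by simp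
  have "wt3 (Suc n) x = r + wt3 n q" by (simp add: wt3_Suc q_def r_def)
  moreover have "wt3 (Suc n) (3 ^ Suc n - 1 - x) = (2 - r) + wt3 n (3 ^ n - 1 - q)"
    by (simp only: wt3_Suc m d)
  ultimately show ?case using Suc.IH[OF q] qr(2) by simp
qed

lemma wt3_small:
  assumes "c < 9" "k \<ge> 2"
  shows "wt3 k c = wt3 2 c"
proof -
  have "wt3 (2 + (k - 2)) (c + 3 ^ 2 * 0) = wt3 2 c + wt3 (k - 2) 0"
    using assms by (intro wt3_split) simp
  moreover have "wt3 n 0 = 0" for n by (simp add: wt3_def digit3_def)
  moreover have "2 + (k - 2) = k" using assms by simp
  ultimately show ?thesis by simp
qed

lemma wt3_2_eval: "wt3 2 c = c mod 3 + (c div 3) mod 3"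
  by (simp add: wt3_def digit3_def numeral_2_eq_2)

lemma wt3_1_eval: "wt3 1 c = c mod 3"
  by (simp add: wt3_def digit3_def)

lemma wt3_Suc0_eval: "wt3 (Suc 0) c = c mod 3"
  by (simp add: wt3_def digit3_def)

lemma wt3_form:
  assumes "y < 3 ^ k" "w < 3 ^ k"
  shows "wt3 (2 * k + 1) (y + 3 ^ k * (w + 3 ^ k * e)) = wt3 k y + wt3 k w + wt3 1 e"
proof -
  have "wt3 (k + (k + 1)) (y + 3 ^ k * (w + 3 ^ k * e)) = wt3 k y + wt3 (k + 1) (w + 3 ^ k * e)"
    using wt3_split[OF assms(1), of "k + 1"] by simp
  moreover have "wt3 (k + 1) (w + 3 ^ k * e) = wt3 k w + wt3 1 e"
    using wt3_split[OF assms(2), of 1] by simp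
  moreover have "k + (k + 1) = 2 * k + 1" by simp
  ultimately show ?thesis by (metis add.assoc)
qed

lemma wt3_zero: "wt3 n 0 = 0" by (simp add: wt3_def digit3_def)

lemma digit3_lt: "digit3 s j < 3" by (simp add: digit3_def)

theorem lemma40:
  fixes m :: nat
  assumes "m \<ge> 5" and "m mod 4 = 1"
  defines "N \<equiv> (3::nat) ^ m - 1"
  defines "v \<equiv> ((3::nat) ^ m - 1) div 2 + 3 ^ ((m - 1) div 2) - 1"
  shows "gcd v N = 1 \<and>
    (\<forall>i::nat. i \<le> ((3::nat) ^ ((m - 1) div 2) - 1) div 4 + 2 \<longrightarrow>
       wt3 m ((v * (1 + 2 * i)) mod N) mod 4 = 1 \<and>
       digits3 m ((v * (1 + 2 * i)) mod N) \<in> S_set 1 m)"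
proof -
  define t where "t = m div 4"
  have t: "m = 4 * t + 1" "t \<ge> 1"
    using div_mult_mod_eq[of m 4] assms(1,2) unfolding t_def by linarith+
  define k where "k = 2 * t"
  have k: "(m - 1) div 2 = k" "m = 2 * k + 1" "k \<ge> 2" using t by (auto simp: k_def)
  define a where "a = (3::nat) ^ k"
  have "a mod 4 = 1"
  proof -
    have "a = 9 ^ t" by (simp add: a_def k_def power_mult)
    also have "9 ^ t mod 4 = ((9::nat) mod 4) ^ t mod 4" by (rule power_mod[symmetric])
    finally show ?thesis by simp
  qed
  then obtain g where g: "a = 4 * g + 1"
    by (metis div_mult_mod_eq add.commute mult.commute)
  have "(3::nat) ^ 2 \<le> 3 ^ k" using k(3) by (intro power_increasing) simp_all
  then have "a \<ge> 9" unfolding a_def by simp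
  then have g2: "g \<ge> 2" using g by simp
  have p3m: "(3::nat) ^ m = 3 * a * a" unfolding a_def k(2)
    by (simp add: power_add power_mult mult_2)
  have Ng: "N = 48 * g * g + 24 * g + 2" unfolding N_def p3m g by (simp add: algebra_simps)
  have Hg: "((3::nat) ^ m - 1) div 2 = 24 * g * g + 12 * g + 1" unfolding p3m g
    by (simp add: algebra_simps)
  have vg: "v = 24 * g * g + 16 * g + 1" unfolding v_def Hg k(1) a_def[symmetric] g by simp
  have bound: "((3::nat) ^ ((m - 1) div 2) - 1) div 4 + 2 = g + 2"
    unfolding k(1) a_def[symmetric] g by simp
  have gcd1: "gcd v N = 1"
  proof -
    let ?d = "gcd v N"
    have "2 * v = N + 8 * g" unfolding vg Ng by simp
    have d1: "?d dvd 2 * v" by simp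
    have "?d dvd N" by simp
    then have "?d dvd 8 * g" using d1 \<open>2 * v = N + 8 * g\<close> by (metis dvd_add_right_iff)
    have "odd v" unfolding vg by simp
    then have "odd ?d" using dvd_trans gcd_dvd1 by blast
    then have c2: "coprime ?d 2" by simp
    have "?d dvd ((g * 2) * 2) * 2" using \<open>?d dvd 8 * g\<close> by (simp add: mult.commute)
    then have "?d dvd (g * 2) * 2" using c2 coprime_dvd_mult_left_iff by blast
    then have "?d dvd g * 2" using c2 coprime_dvd_mult_left_iff by blast
    then have "?d dvd g" using c2 coprime_dvd_mult_left_iff by blast
    then have h1: "?d dvd 24 * g * g + 16 * g" by simp
    have "?d dvd 24 * g * g + 16 * g + 1" using vg by (metis gcd_dvd1)
    then have "?d dvd 1" using h1 by (metis dvd_add_right_iff)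
    then show ?thesis by simp
  qed
  have main: "wt3 m ((v * (1 + 2 * i)) mod N) mod 4 = 1 \<and>
       digits3 m ((v * (1 + 2 * i)) mod N) \<in> S_set 1 m" if i: "i \<le> g + 2" for i
  proof -
    define s where "s = 24 * g * g + 12 * g + 1 + 4 * g * (2 * i + 1)"
    have e1: "v * (1 + 2 * i) = s + i * N" unfolding s_def vg Ng by (simp add: algebra_simps)
    have gi0: "g * i \<le> g * (g + 2)" by (rule mult_le_mono2[OF i])
    have gi: "g * i \<le> g * g + 2 * g" using gi0 by (simp add: algebra_simps)
    have gg: "g \<le> g * g" using g2 by simp
    have s2: "s = 24 * (g * g) + 16 * g + 1 + 8 * (g * i)" unfolding s_def by (simp add: algebra_simps)
    have N2: "N = 48 * (g * g) + 24 * g + 2" unfolding Ng by (simp add: algebra_simps)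
    have "s < N" unfolding s2 N2 using gi gg by linarith
    then have smod: "(v * (1 + 2 * i)) mod N = s" unfolding e1 by simp
    have a3: "a = 3 ^ k" by (simp add: a_def)
    have wt: "wt3 m s mod 4 = 1"
    proof -
      have "i < g \<or> i = g \<or> i = g + 1 \<or> i = g + 2" using i by linarith
      then show ?thesis
      proof (elim disjE)
        assume "i < g"
        then obtain j where j: "g = i + j + 1" using less_imp_Suc_add by fastforce
        define y where "y = 2 * j + 1"
        define z where "z = 2 * g + 1 + 2 * i"
        have yz: "z = 3 ^ k - 1 - y" unfolding a3[symmetric] y_def z_def g j by simp
        have ya: "y < 3 ^ k" unfolding a3[symmetric] y_def g j by simp
        have za: "z < 3 ^ k" unfolding a3[symmetric] z_def g using \<open>i < g\<close> by simp
        have se: "s = y + 3 ^ k * (z + 3 ^ k * 1)" unfolding a3[symmetric] s_def y_def z_def g j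
          by (simp add: algebra_simps)
        have w1: "wt3 (2 * k + 1) (y + 3 ^ k * (z + 3 ^ k * 1)) = wt3 k y + wt3 k z + wt3 1 1"
          by (rule wt3_form[OF ya za])
        have w2: "wt3 k y + wt3 k z = 2 * k" unfolding yz by (rule wt3_compl[OF ya])
        have "wt3 m s = 2 * k + 1" unfolding k(2) se w1 w2 by (simp add: wt3_1_eval wt3_Suc0_eval)
        then show ?thesis unfolding k_def by simp
      next
        assume "i = g"
        define y where "y = 4 * g"
        have ya: "y < 3 ^ k" unfolding a3[symmetric] y_def g by simp
        have yz: "y = 3 ^ k - 1 - 0" unfolding a3[symmetric] y_def g by simp
        have se: "s = y + 3 ^ k * (y + 3 ^ k * 1)" unfolding a3[symmetric] s_def y_def g \<open>i = g\<close>
          by (simp add: algebra_simps)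
        have w1: "wt3 (2 * k + 1) (y + 3 ^ k * (y + 3 ^ k * 1)) = wt3 k y + wt3 k y + wt3 1 1"
          by (rule wt3_form[OF ya ya])
        have "wt3 k 0 + wt3 k (3 ^ k - 1 - 0) = 2 * k" by (rule wt3_compl) simp
        then have w2: "wt3 k y = 2 * k" unfolding yz[symmetric] by (simp add: wt3_zero)
        have "wt3 m s = 4 * k + 1" unfolding k(2) se w1 w2 by (simp add: wt3_1_eval wt3_Suc0_eval)
        then show ?thesis by presburger
      next
        assume "i = g + 1"
        define g' where "g' = g - 2"
        have g': "g = g' + 2" using g2 unfolding g'_def by simp
        define y where "y = 4 * g' + 6"
        have ya: "y < 3 ^ k" unfolding a3[symmetric] y_def g g' by simp
        have one: "(1::nat) < 3 ^ k" unfolding a3[symmetric] g g' by simp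
        have yz: "2 = 3 ^ k - 1 - y" unfolding a3[symmetric] y_def g g' by simp
        have se: "s = y + 3 ^ k * (1 + 3 ^ k * 2)" unfolding a3[symmetric] s_def y_def g g' \<open>i = g + 1\<close>
          by (simp add: algebra_simps)
        have w1: "wt3 (2 * k + 1) (y + 3 ^ k * (1 + 3 ^ k * 2)) = wt3 k y + wt3 k 1 + wt3 1 2"
          by (rule wt3_form[OF ya one])
        have w2: "wt3 k y + wt3 k 2 = 2 * k" using wt3_compl[OF ya] unfolding yz[symmetric] .
        have w3: "wt3 k 2 = 2" "wt3 k 1 = 1"
          using wt3_small[of 2 k] wt3_small[of 1 k] k(3) by (simp_all add: wt3_2_eval)
        have "wt3 m s = 2 * k + 1" unfolding k(2) se w1 using w2 w3 by (simp add: wt3_1_eval wt3_Suc0_eval)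
        then show ?thesis unfolding k_def by simp
      next
        assume "i = g + 2"
        define g' where "g' = g - 2"
        have g': "g = g' + 2" using g2 unfolding g'_def by simp
        define y where "y = 4 * g' + 4"
        have ya: "y < 3 ^ k" unfolding a3[symmetric] y_def g g' by simp
        have three: "(3::nat) < 3 ^ k" unfolding a3[symmetric] g g' by simp
        have yz: "4 = 3 ^ k - 1 - y" unfolding a3[symmetric] y_def g g' by simp
        have se: "s = y + 3 ^ k * (3 + 3 ^ k * 2)" unfolding a3[symmetric] s_def y_def g g' \<open>i = g + 2\<close>
          by (simp add: algebra_simps)
        have w1: "wt3 (2 * k + 1) (y + 3 ^ k * (3 + 3 ^ k * 2)) = wt3 k y + wt3 k 3 + wt3 1 2"
          by (rule wt3_form[OF ya three])
        have w2: "wt3 k y + wt3 k 4 = 2 * k" using wt3_compl[OF ya] unfolding yz[symmetric] .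
        have w3: "wt3 k 4 = 2" "wt3 k 3 = 1"
          using wt3_small[of 4 k] wt3_small[of 3 k] k(3) by (simp_all add: wt3_2_eval)
        have "wt3 m s = 2 * k + 1" unfolding k(2) se w1 using w2 w3 by (simp add: wt3_1_eval wt3_Suc0_eval)
        then show ?thesis unfolding k_def by simp
      qed
    qed
    have "sum_list (digits3 m s) = wt3 m s"
      unfolding digits3_def wt3_def by (simp add: interv_sum_list_conv_sum_set_nat atLeast0LessThan)
    moreover have "set (digits3 m s) \<subseteq> {0, 1, 2}"
    proof -
      have "digit3 s j = 0 \<or> digit3 s j = 1 \<or> digit3 s j = 2" for j
        using digit3_lt[of s j] by arith
      then have d: "digit3 s j \<in> {0, 1, 2}" for j by blast
      show ?thesis unfolding digits3_def set_map image_subset_iff using d by blast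
    qed
    ultimately have "digits3 m s \<in> S_set 1 m" using wt unfolding S_set_def by (simp add: digits3_def)
    then show ?thesis using wt smod by simp
  qed
  show ?thesis using gcd1 main bound by simp
qed

end
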